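(* Run the mechanism BFM-SWM described in the context with arbitrary $B>0$, $\alpha>1$, $\beta>1$, $\epsilon>0$, $\ell\in\{1,2\}$, with all sellers behaving truthfully. Then $$\sum_{i=1}^{\ell}\sum_{t=1}^{M}v(S_{i,t})\ \le\ \frac{2\ell\cdot\alpha\big(v(S^* )-p(S^* )\big)}{(\alpha-1)(1-1/\beta)}.$$
   Context: Setting. $\mathcal{N}$ is a finite set of $n$ sellers. The valuation $v:2^{\mathcal{N}}\to\mathbb{R}_{\ge 0}$ satisfies $v(\emptyset)=0$ and is submodular (for $X\subseteq Y\subseteq\mathcal{N}$ and $u\notin Y$, $v(u\mid Y)\le v(u\mid X)$), not necessarily monotone, where $v(S\mid T)=v(S\cup T)-v(T)$, $v(u\mid T)=v(\{u\}\mid T)$. Each seller $u$ has a private cost $c(u)\ge 0$; $c(X)=\sum_{u\in X}c(u)$, $p(X)=\sum_{u\in X}p(u)$. $B>0$ is the budget, $[\ell]=\{1,\dots,\ell\}$. Sellers behave truthfully: a seller $u$ offered price $q$ accepts iff $c(u)\le q$. Mechanism BFM-SWM (inputs $B$, $\alpha>1$, $\beta>1$, $\epsilon>0$, $\ell\in\{1,2\}$): 1. Offer every seller the price $B$; let $R$ be the set of sellers who accept, and set $p(u)=B$ for $u\in R$. 2. Set $t=0$, $\rho_0=\epsilon/\alpha$, $u^*=\emptyset$ ($u^*$ is a set of at most one seller), and $S_{i,0}=\emptyset$ for $i\in[\ell]$. 3. Repeat rounds: set $t\leftarrow t+1$, $\rho_t=\alpha\rho_{t-1}$, $S_{i,t}=\emptyset$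 for all $i\in[\ell]$. Process the sellers $u\in R\setminus(\bigcup_{i=1}^{\ell}S_{i,t-1}\cup u^* )$ one at a time in a fixed order. For each such $u$: pick $j\in\arg\max_{i\in[\ell]}v(u\mid S_{i,t})$ (current contents); update $p(u)\leftarrow\min\{p(u),\ v(u\mid S_{j,t})/(\beta+\rho_t/B)\}$ and offer $p(u)$ to $u$. If $u$ accepts: if $v(S_{j,t}\cup\{u\})-p(S_{j,t}\cup\{u\})>\rho_t$ (current prices), set $u^*\leftarrow\{u\}$ and end the round immediately; otherwise add $u$ to $S_{j,t}$. If $u$ rejects, remove $u$ from $R$. After the round, stop if $R\setminus\left(\bigcup_{i=1}^{\ell}(S_{i,t-1}\cup S_{i,t})\cup u^*\right)=\emptyset$; otherwise start another round. 4. Let $M$ be the final value of $t$. Output $S^*\in\arg\max_{A\in\{S_{i,t}: i\in[\ell],\ t\in\{M-1,M\}\}\cup\{u^*\}}\big(v(A)-p(A)\big)$, paying each $u\in S^*$ its current price $p(u)$; $p(S^* )$ is the total payment. Notation: $S_{i,t}$ denotes the contents of that candidate set at the end of round $t$. *)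

theory Defs
  imports Main "HOL.Real"
begin

definition submodular_on :: "'a set \<Rightarrow> ('a set \<Rightarrow> real) \<Rightarrow> bool" where
  "submodular_on N v \<longleftrightarrow>
     (\<forall>X Y u. X \<subseteq> Y \<and> Y \<subseteq> N \<and> u \<in> N \<and> u \<notin> Y \<longrightarrow>
        v (Y \<union> {u}) - v Y \<le> v (X \<union> {u}) - v X)"

definition marg :: "('a set \<Rightarrow> real) \<Rightarrow> 'a \<Rightarrow> 'a set \<Rightarrow> real" where
  "marg v u S = v (S \<union> {u}) - v S"

text \<open>State of the mechanism: the set R, current prices p, the set u*,
  the candidate sets S_i of the current round (indexed by i), and a flag
  recording that the current round was ended early.\<close>
record 'a mstate =
  Rs :: "'a set"
  ps :: "'a \<Rightarrow> real"
  us :: "'a set"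
  Ss :: "nat \<Rightarrow> 'a set"
  stopped :: bool

text \<open>Tie-breaking rule: sel t u S is the index j chosen for seller u in round t
  when the current candidate sets are S. It must be an argmax of the marginals.\<close>
definition valid_sel :: "('a set \<Rightarrow> real) \<Rightarrow> nat \<Rightarrow> (nat \<Rightarrow> 'a \<Rightarrow> (nat \<Rightarrow> 'a set) \<Rightarrow> nat) \<Rightarrow> bool" where
  "valid_sel v l sel \<longleftrightarrow>
     (\<forall>t u S. sel t u S \<in> {1..l} \<and>
        (\<forall>i\<in>{1..l}. marg v u (S i) \<le> marg v u (S (sel t u S))))"

definition rho :: "real \<Rightarrow> real \<Rightarrow> nat \<Rightarrow> real" where
  "rho eps \<alpha> t = eps / \<alpha> * \<alpha> ^ t"

text \<open>Processing of one seller u in round t (truthful sellers: accept iff c u \<le> offer).\<close>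
definition step :: "('a set \<Rightarrow> real) \<Rightarrow> ('a \<Rightarrow> real) \<Rightarrow> real \<Rightarrow> real \<Rightarrow> real \<Rightarrow> real
     \<Rightarrow> (nat \<Rightarrow> 'a \<Rightarrow> (nat \<Rightarrow> 'a set) \<Rightarrow> nat) \<Rightarrow> nat \<Rightarrow> 'a \<Rightarrow> 'a mstate \<Rightarrow> 'a mstate" where
  "step v c B \<alpha> \<beta> eps sel t u st =
    (if stopped st then st else
     (let j = sel t u (Ss st);
          Sj = Ss st j;
          q = min (ps st u) (marg v u Sj / (\<beta> + rho eps \<alpha> t / B));
          p' = (ps st)(u := q)
      in if c u \<le> q then
           (if v (Sj \<union> {u}) - sum p' (Sj \<union> {u}) > rho eps \<alpha> t
            then st\<lparr>ps := p', us := {u}, stopped := True\<rparr>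
            else st\<lparr>ps := p', Ss := (Ss st)(j := Sj \<union> {u})\<rparr>)
         else st\<lparr>Rs := Rs st - {u}, ps := p'\<rparr>))"

definition round :: "'a list \<Rightarrow> ('a set \<Rightarrow> real) \<Rightarrow> ('a \<Rightarrow> real) \<Rightarrow> real \<Rightarrow> real \<Rightarrow> real \<Rightarrow> real
     \<Rightarrow> nat \<Rightarrow> (nat \<Rightarrow> 'a \<Rightarrow> (nat \<Rightarrow> 'a set) \<Rightarrow> nat) \<Rightarrow> nat \<Rightarrow> 'a mstate \<Rightarrow> 'a mstate" where
  "round ord v c B \<alpha> \<beta> eps l sel t st =
    (let L = filter (\<lambda>u. u \<in> Rs st \<and> u \<notin> (\<Union>i\<in>{1..l}. Ss st i) \<union> us st) ord
     in fold (step v c B \<alpha> \<beta> eps sel t) L (st\<lparr>Ss := (\<lambda>_. {}), stopped := False\<rparr>))"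

text \<open>run t = state at the end of round t; run 0 = state after steps 1-2.\<close>
primrec run :: "'a list \<Rightarrow> ('a set \<Rightarrow> real) \<Rightarrow> ('a \<Rightarrow> real) \<Rightarrow> real \<Rightarrow> real \<Rightarrow> real \<Rightarrow> real
     \<Rightarrow> nat \<Rightarrow> (nat \<Rightarrow> 'a \<Rightarrow> (nat \<Rightarrow> 'a set) \<Rightarrow> nat) \<Rightarrow> nat \<Rightarrow> 'a mstate" where
  "run ord v c B \<alpha> \<beta> eps l sel 0 =
     \<lparr>Rs = {u \<in> set ord. c u \<le> B}, ps = (\<lambda>_. B), us = {}, Ss = (\<lambda>_. {}), stopped = False\<rparr>"
| "run ord v c B \<alpha> \<beta> eps l sel (Suc t) =
     round ord v c B \<alpha> \<beta> eps l sel (Suc t) (run ord v c B \<alpha> \<beta> eps l sel t)"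

definition stops :: "'a list \<Rightarrow> ('a set \<Rightarrow> real) \<Rightarrow> ('a \<Rightarrow> real) \<Rightarrow> real \<Rightarrow> real \<Rightarrow> real \<Rightarrow> real
     \<Rightarrow> nat \<Rightarrow> (nat \<Rightarrow> 'a \<Rightarrow> (nat \<Rightarrow> 'a set) \<Rightarrow> nat) \<Rightarrow> nat \<Rightarrow> bool" where
  "stops ord v c B \<alpha> \<beta> eps l sel t \<longleftrightarrow> t \<ge> 1 \<and>
     (let prev = run ord v c B \<alpha> \<beta> eps l sel (t - 1); cur = run ord v c B \<alpha> \<beta> eps l sel t
      in Rs cur - ((\<Union>i\<in>{1..l}. Ss prev i \<union> Ss cur i) \<union> us cur) = {})"

definition final_round :: "'a list \<Rightarrow> ('a set \<Rightarrow> real) \<Rightarrow> ('a \<Rightarrow> real) \<Rightarrow> real \<Rightarrow> real \<Rightarrow> real \<Rightarrow> real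
     \<Rightarrow> nat \<Rightarrow> (nat \<Rightarrow> 'a \<Rightarrow> (nat \<Rightarrow> 'a set) \<Rightarrow> nat) \<Rightarrow> nat" where
  "final_round ord v c B \<alpha> \<beta> eps l sel = (LEAST t. stops ord v c B \<alpha> \<beta> eps l sel t)"

text \<open>v(S*) - p(S*): the maximum of v(A) - p(A) over the output candidates,
  with the final prices.\<close>
definition out_value :: "'a list \<Rightarrow> ('a set \<Rightarrow> real) \<Rightarrow> ('a \<Rightarrow> real) \<Rightarrow> real \<Rightarrow> real \<Rightarrow> real \<Rightarrow> real
     \<Rightarrow> nat \<Rightarrow> (nat \<Rightarrow> 'a \<Rightarrow> (nat \<Rightarrow> 'a set) \<Rightarrow> nat) \<Rightarrow> real" where
  "out_value ord v c B \<alpha> \<beta> eps l sel =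
    (let M = final_round ord v c B \<alpha> \<beta> eps l sel;
         fin = run ord v c B \<alpha> \<beta> eps l sel M;
         val = (\<lambda>A. v A - sum (ps fin) A)
     in Max ((\<lambda>A. val A) ` ({Ss (run ord v c B \<alpha> \<beta> eps l sel (M - 1)) i | i. i \<in> {1..l}}
                           \<union> {Ss fin i | i. i \<in> {1..l}} \<union> {us fin})))"

end

theory Submission
  imports Defs
begin

locale mech =
  fixes N :: "'a set" and ord :: "'a list" and v :: "'a set \<Rightarrow> real" and c :: "'a \<Rightarrow> real"
    and B \<alpha> \<beta> eps :: real and l :: nat and sel :: "nat \<Rightarrow> 'a \<Rightarrow> (nat \<Rightarrow> 'a set) \<Rightarrow> nat"
  assumes setord: "set ord = N" and dist: "distinct ord"
    and v0: "v {} = 0" and vnn: "\<forall>X. X \<subseteq> N \<longrightarrow> v X \<ge> 0" and sub: "submodular_on N v"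
    and cnn: "\<forall>u\<in>N. c u \<ge> 0"
    and Bpos: "B > 0" and a1: "\<alpha> > 1" and b1: "\<beta> > 1" and epos: "eps > 0" and l12: "l \<in> {1, 2}"
    and vs: "valid_sel v l sel"
begin

abbreviation "F t \<equiv> step v c B \<alpha> \<beta> eps sel t"
abbreviation "R t \<equiv> run ord v c B \<alpha> \<beta> eps l sel t"
abbreviation "rr t \<equiv> rho eps \<alpha> t"

definition Inv :: "nat \<Rightarrow> 'a mstate \<Rightarrow> bool" where
 "Inv t st \<longleftrightarrow> (\<forall>i. Ss st i \<subseteq> N) \<and> (\<forall>i. \<forall>y\<in>Ss st i. 0 \<le> ps st y)
   \<and> (\<forall>i. \<beta> * sum (ps st) (Ss st i) \<le> v (Ss st i))
   \<and> (\<forall>i. v (Ss st i) - sum (ps st) (Ss st i) \<le> rr t)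
   \<and> (stopped st \<longrightarrow> (\<exists>w j. us st = {w} \<and> w \<in> N \<and> j \<in> {1..l} \<and> w \<notin> Ss st j \<and> 0 \<le> ps st w
        \<and> rr t < v (Ss st j \<union> {w}) - sum (ps st) (Ss st j \<union> {w})))"

lemma finN: "finite N" using setord by auto

lemma rho_pos: "0 < rr t" unfolding rho_def using epos a1 by simp

lemma step_stopped: "stopped st \<Longrightarrow> F t x st = st" by (simp add: step_def)

lemma fold_stopped: "stopped st \<Longrightarrow> fold (F t) xs st = st"
  by (induction xs) (auto simp: step_stopped)

lemma step_inv:
  assumes I: "Inv t st" and xN: "x \<in> N" and xS: "\<forall>i. x \<notin> Ss st i" and ns: "\<not> stopped st"
    and st': "st' = F t x st"
  shows "Inv t st' \<and> Rs st' \<subseteq> Rs st \<and> (\<forall>y. ps st' y \<le> ps st y)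
    \<and> (\<forall>i. Ss st i \<subseteq> Ss st' i \<and> Ss st' i \<subseteq> Ss st i \<union> {x})
    \<and> (\<not> stopped st' \<longrightarrow> us st' = us st \<and> (x \<in> (\<Union>i\<in>{1..l}. Ss st' i) \<or> x \<notin> Rs st'))"
proof -
  define j where "j = sel t x (Ss st)"
  define Sj where "Sj = Ss st j"
  define D where "D = \<beta> + rr t / B"
  define q where "q = min (ps st x) (marg v x Sj / D)"
  define p' where "p' = (ps st)(x := q)"
  have j: "j \<in> {1..l}" using vs unfolding valid_sel_def j_def by blast
  have D: "D \<ge> \<beta>" using rho_pos[of t] Bpos unfolding D_def by simp
  have Dpos: "D > 0" using D b1 by simp
  have IS: "\<forall>i. Ss st i \<subseteq> N" and IP: "\<forall>i. \<forall>y\<in>Ss st i. 0 \<le> ps st y"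
    and IB: "\<forall>i. \<beta> * sum (ps st) (Ss st i) \<le> v (Ss st i)"
    and IR: "\<forall>i. v (Ss st i) - sum (ps st) (Ss st i) \<le> rr t" using I unfolding Inv_def by auto
  have fin: "finite (Ss st i)" for i using IS finN finite_subset by blast
  have pS: "y \<in> Ss st i \<Longrightarrow> p' y = ps st y" for y i using xS by (auto simp: p'_def)
  have sumS: "sum p' (Ss st i) = sum (ps st) (Ss st i)" for i using pS by (intro sum.cong) auto
  have px: "p' x = q" by (simp add: p'_def)
  have pdec: "\<forall>y. p' y \<le> ps st y" by (simp add: p'_def q_def)
  have st'_eq: "st' = (if c x \<le> q then (if v (Sj \<union> {x}) - sum p' (Sj \<union> {x}) > rr t
      then st\<lparr>ps := p', us := {x}, stopped := True\<rparr>
      else st\<lparr>ps := p', Ss := (Ss st)(j := Sj \<union> {x})\<rparr>) else st\<lparr>Rs := Rs st - {x}, ps := p'\<rparr>)"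
    unfolding st' step_def using ns by (simp add: Let_def j_def Sj_def q_def p'_def D_def)
  show ?thesis
  proof (cases "c x \<le> q")
    case acc: True
    have q0: "0 \<le> q" using acc cnn xN by force
    have qD: "q \<le> marg v x Sj / D" unfolding q_def by simp
    hence "q * D \<le> marg v x Sj" using Dpos by (simp add: pos_le_divide_eq)
    moreover have "\<beta> * q \<le> D * q" using D q0 by (simp add: mult_right_mono)
    ultimately have bq: "\<beta> * q \<le> marg v x Sj" by (simp add: mult.commute)
    have xSj: "x \<notin> Sj" using xS Sj_def by auto
    have ins: "Sj \<union> {x} = insert x Sj" by auto
    have sumx: "sum p' (Sj \<union> {x}) = sum (ps st) Sj + q"
      unfolding ins using xSj fin[of j] sumS[of j] px by (simp add: Sj_def)
    show ?thesis
    proof (cases "v (Sj \<union> {x}) - sum p' (Sj \<union> {x}) > rr t")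
      case trig: True
      have e: "st' = st\<lparr>ps := p', us := {x}, stopped := True\<rparr>" using st'_eq acc trig by simp
      have ex: "\<exists>w j'. {x} = {w} \<and> w \<in> N \<and> j' \<in> {1..l} \<and> w \<notin> Ss st j' \<and> 0 \<le> p' w
        \<and> rr t < v (Ss st j' \<union> {w}) - sum p' (Ss st j' \<union> {w})"
        using xN j xSj q0 trig px unfolding Sj_def by blast
      have "Inv t st'" unfolding Inv_def e using IS IP IB IR sumS pS ex by simp
      then show ?thesis using e pdec by auto
    next
      case nt: False
      have e: "st' = st\<lparr>ps := p', Ss := (Ss st)(j := Sj \<union> {x})\<rparr>" using st'_eq acc nt by simp
      have bj: "\<beta> * sum p' (Sj \<union> {x}) \<le> v (Sj \<union> {x})"
      proof -
        have "\<beta> * sum (ps st) Sj \<le> v Sj" using IB Sj_def by simp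
        then show ?thesis using sumx bq unfolding marg_def by (simp add: distrib_left)
      qed
      have "Inv t st'" unfolding Inv_def e using IS IP IB IR sumS pS xN q0 px bj nt ns
        by (auto simp: Sj_def)
      then show ?thesis using e pdec j by (auto simp: Sj_def)
    qed
  next
    case rej: False
    have e: "st' = st\<lparr>Rs := Rs st - {x}, ps := p'\<rparr>" using st'_eq rej by simp
    have "Inv t st'" unfolding Inv_def e using IS IP IB IR sumS pS ns by simp
    then show ?thesis using e pdec ns by auto
  qed
qed

lemma fold_inv:
  "distinct xs \<Longrightarrow> set xs \<subseteq> N \<Longrightarrow> Inv t st \<Longrightarrow> (\<forall>i. Ss st i \<inter> set xs = {}) \<Longrightarrow>
   st' = fold (F t) xs st \<Longrightarrow>
   Inv t st' \<and> Rs st' \<subseteq> Rs st \<and> (\<forall>y. ps st' y \<le> ps st y) \<and> (\<forall>i. Ss st i \<subseteq> Ss st' i)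
   \<and> (stopped st \<longrightarrow> st' = st)
   \<and> (\<not> stopped st' \<longrightarrow> us st' = us st \<and> (\<forall>x\<in>set xs. x \<in> (\<Union>i\<in>{1..l}. Ss st' i) \<or> x \<notin> Rs st'))"
proof (induction xs arbitrary: st st')
  case Nil
  then show ?case by simp
next
  case (Cons x xs)
  show ?case
  proof (cases "stopped st")
    case True
    have "st' = st" using Cons.prems(5) True by (simp add: step_stopped fold_stopped)
    then show ?thesis using Cons.prems(3) True by simp
  next
    case ns: False
    define st1 where "st1 = F t x st"
    have S1: "Inv t st1 \<and> Rs st1 \<subseteq> Rs st \<and> (\<forall>y. ps st1 y \<le> ps st y)
      \<and> (\<forall>i. Ss st i \<subseteq> Ss st1 i \<and> Ss st1 i \<subseteq> Ss st i \<union> {x})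
      \<and> (\<not> stopped st1 \<longrightarrow> us st1 = us st \<and> (x \<in> (\<Union>i\<in>{1..l}. Ss st1 i) \<or> x \<notin> Rs st1))"
      using step_inv[OF Cons.prems(3), of x st1] Cons.prems ns st1_def by auto
    have st': "st' = fold (F t) xs st1" using Cons.prems(5) st1_def by simp
    have dj: "\<forall>i. Ss st1 i \<inter> set xs = {}" using S1 Cons.prems(1,4) by fastforce
    have IH: "Inv t st' \<and> Rs st' \<subseteq> Rs st1 \<and> (\<forall>y. ps st' y \<le> ps st1 y) \<and> (\<forall>i. Ss st1 i \<subseteq> Ss st' i)
     \<and> (stopped st1 \<longrightarrow> st' = st1)
     \<and> (\<not> stopped st' \<longrightarrow> us st' = us st1 \<and> (\<forall>x\<in>set xs. x \<in> (\<Union>i\<in>{1..l}. Ss st' i) \<or> x \<notin> Rs st'))"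
      using Cons.IH[of st1 st'] Cons.prems dj S1 st' by auto
    show ?thesis
    proof (intro conjI)
      show "Inv t st'" using IH by simp
      show "Rs st' \<subseteq> Rs st" using IH S1 by blast
      show "\<forall>y. ps st' y \<le> ps st y" using IH S1 by (meson order_trans)
      show "\<forall>i. Ss st i \<subseteq> Ss st' i" using IH S1 by blast
      show "stopped st \<longrightarrow> st' = st" using ns by simp
      show "\<not> stopped st' \<longrightarrow> us st' = us st \<and> (\<forall>x\<in>set (x # xs). x \<in> (\<Union>i\<in>{1..l}. Ss st' i) \<or> x \<notin> Rs st')"
      proof
        assume nst: "\<not> stopped st'"
        then have n1: "\<not> stopped st1" using IH by auto
        then have "x \<in> (\<Union>i\<in>{1..l}. Ss st' i) \<or> x \<notin> Rs st'" using S1 IH by blast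
        then show "us st' = us st \<and> (\<forall>x\<in>set (x # xs). x \<in> (\<Union>i\<in>{1..l}. Ss st' i) \<or> x \<notin> Rs st')"
          using IH S1 nst n1 by auto
      qed
    qed
  qed
qed

lemma round_inv:
  assumes t: "t \<ge> 1"
  shows "Inv t (R t) \<and> Rs (R t) \<subseteq> Rs (R (t-1)) \<and> (\<forall>y. ps (R t) y \<le> ps (R (t-1)) y)
    \<and> (\<not> stopped (R t) \<longrightarrow> us (R t) = us (R (t-1)) \<and>
       (\<forall>x\<in>set ord. x \<in> Rs (R (t-1)) \<and> x \<notin> (\<Union>i\<in>{1..l}. Ss (R (t-1)) i) \<union> us (R (t-1))
          \<longrightarrow> x \<in> (\<Union>i\<in>{1..l}. Ss (R t) i) \<or> x \<notin> Rs (R t)))"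
proof -
  obtain s where ts: "t = Suc s" using t by (cases t) auto
  define st0 where "st0 = (R s)\<lparr>Ss := (\<lambda>_. {}), stopped := False\<rparr>"
  define L where "L = filter (\<lambda>u. u \<in> Rs (R s) \<and> u \<notin> (\<Union>i\<in>{1..l}. Ss (R s) i) \<union> us (R s)) ord"
  have eq: "R t = fold (F t) L st0" unfolding ts st0_def L_def by (simp add: round_def Let_def)
  have I0: "Inv t st0" unfolding Inv_def st0_def using rho_pos[of t] v0 by simp
  have "Inv t (R t) \<and> Rs (R t) \<subseteq> Rs st0 \<and> (\<forall>y. ps (R t) y \<le> ps st0 y) \<and> (\<forall>i. Ss st0 i \<subseteq> Ss (R t) i)
   \<and> (stopped st0 \<longrightarrow> R t = st0)
   \<and> (\<not> stopped (R t) \<longrightarrow> us (R t) = us st0 \<and> (\<forall>x\<in>set L. x \<in> (\<Union>i\<in>{1..l}. Ss (R t) i) \<or> x \<notin> Rs (R t)))"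
    by (rule fold_inv[OF _ _ I0 _ eq]) (auto simp: L_def dist setord st0_def)
  then show ?thesis unfolding L_def st0_def ts by auto
qed

lemma Rs_ord: "Rs (R t) \<subseteq> set ord"
proof (induction t)
  case 0
  then show ?case by auto
next
  case (Suc t)
  then show ?case using round_inv[of "Suc t"] by auto
qed

lemma ps_mono: "s \<le> t \<Longrightarrow> ps (R t) y \<le> ps (R s) y"
  using lift_Suc_antimono_le[of "\<lambda>n. ps (R n) y"] round_inv by (metis diff_Suc_1 le_add1 plus_1_eq_Suc)

lemma nstop_stops:
  assumes "t \<ge> 1" "\<not> stopped (R t)"
  shows "stops ord v c B \<alpha> \<beta> eps l sel t"
proof -
  have H: "Rs (R t) \<subseteq> Rs (R (t-1)) \<and> us (R t) = us (R (t-1)) \<and>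
       (\<forall>x\<in>set ord. x \<in> Rs (R (t-1)) \<and> x \<notin> (\<Union>i\<in>{1..l}. Ss (R (t-1)) i) \<union> us (R (t-1))
          \<longrightarrow> x \<in> (\<Union>i\<in>{1..l}. Ss (R t) i) \<or> x \<notin> Rs (R t))"
    using round_inv[OF assms(1)] assms(2) by auto
  have "Rs (R t) - ((\<Union>i\<in>{1..l}. Ss (R (t-1)) i \<union> Ss (R t) i) \<union> us (R t)) = {}"
  proof -
    { fix x assume x: "x \<in> Rs (R t)" "x \<notin> (\<Union>i\<in>{1..l}. Ss (R (t-1)) i \<union> Ss (R t) i) \<union> us (R t)"
      have "x \<in> set ord" using x Rs_ord by auto
      then have False using H x by blast }
    then show ?thesis by blast
  qed
  then show ?thesis unfolding stops_def Let_def using assms(1) by simp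
qed

lemma trig:
  assumes t: "t \<ge> 1" "t \<le> T" and st: "stopped (R t)"
  shows "\<exists>w j. us (R t) = {w} \<and> j \<in> {1..l} \<and>
    rr t < (v (Ss (R t) j) - sum (ps (R T)) (Ss (R t) j)) + (v {w} - sum (ps (R T)) {w})"
proof -
  have I: "Inv t (R t)" using round_inv[OF t(1)] by simp
  then obtain w j where W: "us (R t) = {w}" "w \<in> N" "j \<in> {1..l}" "w \<notin> Ss (R t) j"
    "rr t < v (Ss (R t) j \<union> {w}) - sum (ps (R t)) (Ss (R t) j \<union> {w})"
    using st unfolding Inv_def by blast
  define S where "S = Ss (R t) j"
  have SN: "S \<subseteq> N" using I unfolding Inv_def S_def by blast
  have fS: "finite S" using SN finN finite_subset by blast
  have m: "sum (ps (R T)) (S \<union> {w}) \<le> sum (ps (R t)) (S \<union> {w})"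
    by (rule sum_mono) (rule ps_mono[OF t(2)])
  have ins: "S \<union> {w} = insert w S" by auto
  have e: "sum (ps (R T)) (S \<union> {w}) = sum (ps (R T)) S + ps (R T) w"
    unfolding ins using fS W(4) S_def by simp
  have "v (S \<union> {w}) - v S \<le> v ({} \<union> {w}) - v {}"
    using sub SN W(2,4) unfolding submodular_on_def S_def by blast
  then have "v (S \<union> {w}) \<le> v S + v {w}" using v0 by simp
  then show ?thesis using W m e unfolding S_def by (intro exI[of _ w] exI[of _ j]) auto
qed

lemma val_bound:
  assumes t: "t \<ge> 1" "t \<le> T"
  shows "(1 - 1/\<beta>) * v (Ss (R t) i) \<le> v (Ss (R t) i) - sum (ps (R T)) (Ss (R t) i)"
proof -
  have I: "Inv t (R t)" using round_inv[OF t(1)] by simp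
  then have b: "\<beta> * sum (ps (R t)) (Ss (R t) i) \<le> v (Ss (R t) i)" unfolding Inv_def by blast
  have m: "sum (ps (R T)) (Ss (R t) i) \<le> sum (ps (R t)) (Ss (R t) i)"
    by (rule sum_mono) (rule ps_mono[OF t(2)])
  have "\<beta> * sum (ps (R T)) (Ss (R t) i) \<le> v (Ss (R t) i)"
    using b m b1 by (smt (verit) mult_left_mono)
  then have "sum (ps (R T)) (Ss (R t) i) \<le> v (Ss (R t) i) / \<beta>" using b1 by (simp add: pos_le_divide_eq mult.commute)
  then show ?thesis by (simp add: algebra_simps)
qed

lemma rho_bound:
  assumes t: "t \<ge> 1"
  shows "(1 - 1/\<beta>) * v (Ss (R t) i) \<le> rr t"
proof -
  have I: "Inv t (R t)" using round_inv[OF t(1)] by simp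
  then have "v (Ss (R t) i) - sum (ps (R t)) (Ss (R t) i) \<le> rr t" unfolding Inv_def by blast
  then show ?thesis using val_bound[OF t order.refl, of i] by simp
qed

lemma geom: "(\<Sum>t\<in>{1..m}. rr t) \<le> rr (Suc m) / (\<alpha> - 1)"
proof (induction m)
  case 0
  then show ?case using rho_pos[of 1] a1 by simp
next
  case (Suc m)
  have e: "rr (Suc (Suc m)) = \<alpha> * rr (Suc m)" unfolding rho_def by simp
  have "(\<Sum>t\<in>{1..Suc m}. rr t) = (\<Sum>t\<in>{1..m}. rr t) + rr (Suc m)" by simp
  also have "\<dots> \<le> rr (Suc m) / (\<alpha> - 1) + rr (Suc m)" using Suc by simp
  also have "\<dots> = rr (Suc (Suc m)) / (\<alpha> - 1)" unfolding e using a1 by (simp add: field_simps)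
  finally show ?case .
qed

lemma stopped_bound:
  assumes t: "t \<ge> 1" and st: "stopped (R t)"
  shows "rr t < Max (v ` Pow N)"
proof -
  have I: "Inv t (R t)" using round_inv[OF t(1)] by simp
  then obtain w j where W: "w \<in> N" "0 \<le> ps (R t) w" 
    "rr t < v (Ss (R t) j \<union> {w}) - sum (ps (R t)) (Ss (R t) j \<union> {w})"
    using st unfolding Inv_def by blast
  have SN: "Ss (R t) j \<subseteq> N" and P: "\<forall>y\<in>Ss (R t) j. 0 \<le> ps (R t) y" using I unfolding Inv_def by auto
  have "0 \<le> sum (ps (R t)) (Ss (R t) j \<union> {w})" using P W(2) by (intro sum_nonneg) auto
  moreover have "v (Ss (R t) j \<union> {w}) \<le> Max (v ` Pow N)" using SN W(1) finN by (intro Max_ge) auto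
  ultimately show ?thesis using W(3) by simp
qed

lemma exists_stop: "\<exists>t. stops ord v c B \<alpha> \<beta> eps l sel t"
proof -
  obtain n where n: "Max (v ` Pow N) / eps < \<alpha> ^ n" using real_arch_pow[OF a1] by blast
  have "rr (Suc n) = eps * \<alpha> ^ n" unfolding rho_def using a1 by simp
  then have "Max (v ` Pow N) < rr (Suc n)" using n epos by (simp add: pos_divide_less_eq mult.commute)
  then have "\<not> stopped (R (Suc n))" using stopped_bound[of "Suc n"] by fastforce
  then show ?thesis using nstop_stops[of "Suc n"] by auto
qed

lemma main:
  "(\<exists>t. stops ord v c B \<alpha> \<beta> eps l sel t) \<and>
    (\<Sum>i\<in>{1..l}. \<Sum>t\<in>{1..final_round ord v c B \<alpha> \<beta> eps l sel}.
        v (Ss (run ord v c B \<alpha> \<beta> eps l sel t) i))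
    \<le> 2 * real l * \<alpha> * out_value ord v c B \<alpha> \<beta> eps l sel / ((\<alpha> - 1) * (1 - 1 / \<beta>))"
proof -
  define M where "M = final_round ord v c B \<alpha> \<beta> eps l sel"
  have sM: "stops ord v c B \<alpha> \<beta> eps l sel M" unfolding M_def final_round_def
    using exists_stop by (rule LeastI_ex)
  have M1: "M \<ge> 1" using sM unfolding stops_def by simp
  have nb: "\<not> stops ord v c B \<alpha> \<beta> eps l sel t" if "t < M" for t
    using that unfolding M_def final_round_def by (rule not_less_Least)
  have stp: "stopped (R t)" if "1 \<le> t" "t < M" for t using nb nstop_stops that by blast
  define fin where "fin = R M"
  define val where "val = (\<lambda>A. v A - sum (ps fin) A)"
  define C where "C = {Ss (R (M - 1)) i | i. i \<in> {1..l}} \<union> {Ss fin i | i. i \<in> {1..l}} \<union> {us fin}"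
  define out where "out = out_value ord v c B \<alpha> \<beta> eps l sel"
  have out_eq: "out = Max (val ` C)"
    unfolding out_def out_value_def Let_def M_def[symmetric] fin_def[symmetric] val_def C_def by simp
  have "C \<subseteq> (\<lambda>i. Ss (R (M - 1)) i) ` {1..l} \<union> (\<lambda>i. Ss fin i) ` {1..l} \<union> {us fin}"
    unfolding C_def by auto
  then have finC: "finite C" by (rule finite_subset) auto
  have leout: "val A \<le> out" if "A \<in> C" for A
    unfolding out_eq using finC that by (auto intro: Max_ge)
  define k where "k = 1 - 1 / \<beta>"
  have kpos: "k > 0" unfolding k_def using b1 by simp
  have aM: "k * v (Ss fin i) \<le> out" if "i \<in> {1..l}" for i
  proof -
    have "Ss fin i \<in> C" unfolding C_def using that by blast
    then show ?thesis using val_bound[OF M1 order.refl, of i] leout unfolding k_def val_def fin_def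
      by fastforce
  qed
  have aM1: "k * v (Ss (R (M - 1)) i) \<le> out" if "i \<in> {1..l}" "M \<ge> 2" for i
  proof -
    have "Ss (R (M - 1)) i \<in> C" unfolding C_def using that by blast
    then show ?thesis using val_bound[of "M - 1" M i] that leout unfolding k_def val_def fin_def
      by fastforce
  qed
  have l1: "1 \<in> {1..l}" using l12 by auto
  have vnnS: "0 \<le> v (Ss (R t) i)" if "t \<ge> 1" for t i
  proof -
    have "Inv t (R t)" using round_inv[OF that] by simp
    then have "Ss (R t) i \<subseteq> N" unfolding Inv_def by blast
    then show ?thesis using vnn by blast
  qed
  have out0: "0 \<le> out" using aM[OF l1] vnnS[OF M1, of 1] kpos unfolding fin_def
    by (smt (verit) mult_nonneg_nonneg)
  have rho2: "rr (M - 1) < 2 * out" if M2: "M \<ge> 2"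
  proof -
    have sM1: "stopped (R (M - 1))" using stp[of "M - 1"] M2 by simp
    show ?thesis
    proof (cases "stopped (R M)")
      case True
      obtain w j where W: "us (R M) = {w}" "j \<in> {1..l}"
        "rr M < val (Ss (R M) j) + val {w}"
        using trig[OF M1 order.refl True] unfolding val_def fin_def by blast
      have "Ss (R M) j \<in> C" "{w} \<in> C" unfolding C_def fin_def using W by auto
      then have "val (Ss (R M) j) \<le> out" "val {w} \<le> out" using leout by auto
      then have "rr M < 2 * out" using W by linarith
      moreover have "rr (M - 1) \<le> rr M" unfolding rho_def using a1 epos M2
        by (intro mult_left_mono power_increasing) auto
      ultimately show ?thesis by simp
    next
      case False
      then have us: "us (R M) = us (R (M - 1))" using round_inv[OF M1] by simp
      obtain w j where W: "us (R (M - 1)) = {w}" "j \<in> {1..l}"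
        "rr (M - 1) < val (Ss (R (M - 1)) j) + val {w}"
      proof -
        have "1 \<le> M - 1" "M - 1 \<le> M" using M2 by auto
        from trig[OF this sM1] show ?thesis using that unfolding val_def fin_def by blast
      qed
      have "Ss (R (M - 1)) j \<in> C" "{w} \<in> C" unfolding C_def fin_def using W us by auto
      then have "val (Ss (R (M - 1)) j) \<le> out" "val {w} \<le> out" using leout by auto
      then show ?thesis using W by linarith
    qed
  qed
  define K where "K = 2 * \<alpha> * out / (\<alpha> - 1)"
  have K: "out \<le> K" "2 * out / (\<alpha> - 1) + 2 * out = K"
    unfolding K_def using a1 out0 by (auto simp: field_simps)
  have peri: "(\<Sum>t\<in>{1..M}. v (Ss (R t) i)) \<le> K / k" if i: "i \<in> {1..l}" for i
  proof -
    have "k * (\<Sum>t\<in>{1..M}. v (Ss (R t) i)) \<le> K"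
    proof (cases "M = 1")
      case True
      then show ?thesis using aM[OF i] K unfolding fin_def by simp
    next
      case False
      then obtain m where m: "M = Suc (Suc m)" using M1 by (cases M; cases "M - 1") auto
      have s: "(\<Sum>t\<in>{1..M}. v (Ss (R t) i)) = (\<Sum>t\<in>{1..m}. v (Ss (R t) i)) + v (Ss (R (Suc m)) i) + v (Ss (R M) i)"
        unfolding m by simp
      have "k * (\<Sum>t\<in>{1..m}. v (Ss (R t) i)) = (\<Sum>t\<in>{1..m}. k * v (Ss (R t) i))"
        by (simp add: sum_distrib_left)
      also have "\<dots> \<le> (\<Sum>t\<in>{1..m}. rr t)" using rho_bound unfolding k_def by (intro sum_mono) auto
      also have "\<dots> \<le> rr (Suc m) / (\<alpha> - 1)" by (rule geom)
      also have "\<dots> \<le> 2 * out / (\<alpha> - 1)" using rho2 m a1 by (simp add: divide_right_mono)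
      finally have A: "k * (\<Sum>t\<in>{1..m}. v (Ss (R t) i)) \<le> 2 * out / (\<alpha> - 1)" .
      have B: "k * v (Ss (R (Suc m)) i) \<le> out" using aM1[OF i] m by simp
      have Cc: "k * v (Ss (R M) i) \<le> out" using aM[OF i] unfolding fin_def .
      show ?thesis unfolding s using A B Cc K(2) by (simp add: distrib_left)
    qed
    then show ?thesis using kpos by (simp add: pos_le_divide_eq mult.commute)
  qed
  have "(\<Sum>i\<in>{1..l}. \<Sum>t\<in>{1..M}. v (Ss (R t) i)) \<le> of_nat (card {1..l}) * (K / k)"
    by (rule sum_bounded_above) (rule peri)
  also have "\<dots> = 2 * real l * \<alpha> * out / ((\<alpha> - 1) * (1 - 1 / \<beta>))"
    unfolding K_def k_def by simp
  finally show ?thesis using exists_stop unfolding M_def out_def by simp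
qed

end
theorem lemma4p7:
  fixes N :: "'a set" and ord :: "'a list"
    and v :: "'a set \<Rightarrow> real" and c :: "'a \<Rightarrow> real"
    and B \<alpha> \<beta> eps :: real and l :: nat
    and sel :: "nat \<Rightarrow> 'a \<Rightarrow> (nat \<Rightarrow> 'a set) \<Rightarrow> nat"
  assumes "set ord = N" and "distinct ord"
    and "v {} = 0" and "\<forall>X. X \<subseteq> N \<longrightarrow> v X \<ge> 0" and "submodular_on N v"
    and "\<forall>u\<in>N. c u \<ge> 0"
    and "B > 0" and "\<alpha> > 1" and "\<beta> > 1" and "eps > 0" and "l \<in> {1, 2}"
    and "valid_sel v l sel"
  shows "(\<exists>t. stops ord v c B \<alpha> \<beta> eps l sel t) \<and>
    (\<Sum>i\<in>{1..l}. \<Sum>t\<in>{1..final_round ord v c B \<alpha> \<beta> eps l sel}.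
        v (Ss (run ord v c B \<alpha> \<beta> eps l sel t) i))
    \<le> 2 * real l * \<alpha> * out_value ord v c B \<alpha> \<beta> eps l sel / ((\<alpha> - 1) * (1 - 1 / \<beta>))"
  using mech.main[of N ord v c B \<alpha> \<beta> eps l sel] assms unfolding mech_def by blast

end
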